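(* Let $\alpha\in(0,1)$, $n\ge1$, and let $(x_{i1},x_{i2},y_i)\in\mathbb R^3$, $i=1,\dots,n$. Write $s_j(\theta)=\frac1n\sum_{i=1}^n\mathrm S^{\rm E}_{\alpha,\theta}(x_{ij},y_i)$ for $j=1,2$. Suppose that $s_1(\theta)\le s_2(\theta)$ for every $\theta\in\{x_{11},x_{12},y_1,\dots,x_{n1},x_{n2},y_n\}$, and that $\lim_{\theta\uparrow\theta_0}s_1(\theta)\le\lim_{\theta\uparrow\theta_0}s_2(\theta)$ for every $\theta_0\in\{x_{11},x_{12},\dots,x_{n1},x_{n2}\}$. Then $s_1(\theta)\le s_2(\theta)$ for every $\theta\in\mathbb R$, and consequently $\frac1n\sum_{i=1}^n\mathrm S(x_{i1},y_i)\le\frac1n\sum_{i=1}^n\mathrm S(x_{i2},y_i)$ for every $\mathrm S\in\mathcal S^{\rm E}_\alpha$ (i.e. $(x_{i1})_i$ dominates $(x_{i2})_i$ for $\alpha$-expectile prediction). In the case $\alpha=1/2$ the same conclusion holds if the condition at the points $\theta\in\{y_1,\dots,y_n\}$ is omitted.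
   Context: $(t)_+=\max(t,0)$. For convex $\phi:\mathbb R\to\mathbb R$, $\phi'$ is its left-hand derivative. $\mathcal S^{\rm E}_\alpha$ is the class of all scoring functions $\mathrm S(x,y)=|\mathbb 1(y<x)-\alpha|\,(\phi(y)-\phi(x)-\phi'(x)(y-x))$ with $\phi$ convex. The elementary expectile scoring function is $\mathrm S^{\rm E}_{\alpha,\theta}(x,y)=|\mathbb 1(y<x)-\alpha|\big((y-\theta)_+-(x-\theta)_+-(y-x)\mathbb 1(\theta<x)\big)$, i.e. it equals $(1-\alpha)|y-\theta|$ if $y\le\theta<x$, $\alpha|y-\theta|$ if $x\le\theta<y$, and $0$ otherwise. *)

theory Defs
  imports "HOL-Analysis.Analysis"
begin

definition pos_part :: "real \<Rightarrow> real" where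
  "pos_part t = max t 0"

definition left_deriv :: "(real \<Rightarrow> real) \<Rightarrow> real \<Rightarrow> real" where
  "left_deriv phi x = Lim (at_left x) (\<lambda>t. (phi x - phi t) / (x - t))"

definition expectile_score :: "real \<Rightarrow> (real \<Rightarrow> real) \<Rightarrow> real \<Rightarrow> real \<Rightarrow> real" where
  "expectile_score alpha phi x y =
     \<bar>of_bool (y < x) - alpha\<bar> * (phi y - phi x - left_deriv phi x * (y - x))"

definition elem_expectile_score :: "real \<Rightarrow> real \<Rightarrow> real \<Rightarrow> real \<Rightarrow> real" where
  "elem_expectile_score alpha theta x y =
     \<bar>of_bool (y < x) - alpha\<bar> *
       (pos_part (y - theta) - pos_part (x - theta) - (y - x) * of_bool (theta < x))"

definition avg_elem_score :: "real \<Rightarrow> nat \<Rightarrow> (nat \<Rightarrow> real) \<Rightarrow> (nat \<Rightarrow> real) \<Rightarrow> real \<Rightarrow> real" where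
  "avg_elem_score alpha n x y theta =
     (1 / real n) * (\<Sum>i<n. elem_expectile_score alpha theta (x i) (y i))"

end

theory Submission
  imports Defs
begin

lemma swap_div: "(p - q) / (r - s) = (q - p) / (s - (r::real))"
  by (metis minus_diff_eq minus_divide_divide)

lemma slope_mono_left:
  fixes phi :: "real \<Rightarrow> real"
  assumes cv: "convex_on UNIV phi" and "a < b" "b < c"
  shows "(phi a - phi c) / (a - c) \<le> (phi b - phi c) / (b - c)"
  using convex_on_slope_le(2)[OF cv _ _ assms(2,3)] by simp

lemma slope_mono_right:
  fixes phi :: "real \<Rightarrow> real"
  assumes cv: "convex_on UNIV phi" and "a < b" "b < c"
  shows "(phi a - phi b) / (a - b) \<le> (phi b - phi c) / (b - c)"
proof -
  have "(phi a - phi b) / (a - b) \<le> (phi a - phi c) / (a - c)"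
    using convex_on_slope_le(1)[OF cv _ _ assms(2,3)] by simp
  also have "\<dots> \<le> (phi b - phi c) / (b - c)"
    using convex_on_slope_le(2)[OF cv _ _ assms(2,3)] by simp
  finally show ?thesis .
qed

lemma left_deriv_tendsto:
  fixes phi :: "real \<Rightarrow> real"
  assumes cv: "convex_on UNIV phi"
  shows "((\<lambda>t. (phi x - phi t) / (x - t)) \<longlongrightarrow> left_deriv phi x) (at_left x)"
proof -
  let ?f = "\<lambda>t. (phi x - phi t) / (x - t)"
  have mono: "?f a \<le> ?f b" if "a \<le> b" "b < x" for a b
  proof (cases "a = b")
    case False
    then have "a < b" using that by simp
    from slope_mono_left[OF cv this \<open>b < x\<close>] show ?thesis
      by (simp only: swap_div[of "phi x"])
  qed simp
  have bnd: "?f b \<le> (phi x - phi (x+1)) / (x - (x+1))" if "b < x" for b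
    using slope_mono_right[OF cv that, of "x+1"]
    by (simp only: swap_div[of "phi x" "phi b"])
  have "(?f \<longlongrightarrow> Sup (?f ` ({..<x} \<inter> UNIV))) (at x within ({..<x} \<inter> UNIV))"
    by (rule Lim_left_bound[where K="(phi x - phi (x+1)) / (x - (x+1))"]) (use mono bnd in auto)
  then have lim: "(?f \<longlongrightarrow> Sup (?f ` ({..<x} \<inter> UNIV))) (at_left x)" by simp
  then have "left_deriv phi x = Sup (?f ` ({..<x} \<inter> UNIV))"
    unfolding left_deriv_def by (intro tendsto_Lim) auto
  with lim show ?thesis by simp
qed

lemma lt_ex1: "(p::real) - 1 < p" by simp

lemma ld_le_slope:
  fixes phi :: "real \<Rightarrow> real"
  assumes cv: "convex_on UNIV phi" and pq: "p < q"
  shows "left_deriv phi p \<le> (phi q - phi p) / (q - p)"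
proof (rule tendsto_le[OF _ tendsto_const left_deriv_tendsto[OF cv]])
  show "\<forall>\<^sub>F t in at_left p. (phi p - phi t) / (p - t) \<le> (phi q - phi p) / (q - p)"
    using eventually_at_left_real[OF lt_ex1]
  proof (rule eventually_mono)
    fix t assume "t \<in> {p - 1<..<p}"
    then have "t < p" by simp
    from slope_mono_right[OF cv this pq] show "(phi p - phi t) / (p - t) \<le> (phi q - phi p) / (q - p)"
      by (simp only: swap_div[of "phi p" "phi t"] swap_div[of "phi q" "phi p"])
  qed
qed simp

lemma slope_le_ld:
  fixes phi :: "real \<Rightarrow> real"
  assumes cv: "convex_on UNIV phi" and pq: "p < q"
  shows "(phi q - phi p) / (q - p) \<le> left_deriv phi q"
proof (rule tendsto_le[OF _ left_deriv_tendsto[OF cv] tendsto_const])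
  show "\<forall>\<^sub>F t in at_left q. (phi q - phi p) / (q - p) \<le> (phi q - phi t) / (q - t)"
    using eventually_at_left_real[OF pq]
  proof (rule eventually_mono)
    fix t assume "t \<in> {p<..<q}"
    then have "p < t" "t < q" by auto
    from slope_mono_left[OF cv this] show "(phi q - phi p) / (q - p) \<le> (phi q - phi t) / (q - t)"
      by (simp only: swap_div[of "phi q"])
  qed
qed simp

lemma ld_linear:
  fixes phi :: "real \<Rightarrow> real"
  assumes cv: "convex_on UNIV phi" and tq: "t < q"
    and eq: "phi q = phi t + left_deriv phi t * (q - t)"
  shows "left_deriv phi q = left_deriv phi t"
proof -
  let ?g = "left_deriv phi t"
  have lin: "phi s = phi t + ?g * (s - t)" if "t < s" "s < q" for s
  proof -
    have "phi s \<le> (phi q - phi t) / (q - t) * (s - t) + phi t"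
      by (rule convex_onD_Icc') (use cv convex_on_subset that in auto)
    also have "(phi q - phi t) / (q - t) = ?g" using eq tq by (simp add: field_simps)
    finally have 1: "phi s \<le> phi t + ?g * (s - t)" by simp
    have "?g \<le> (phi s - phi t) / (s - t)" by (rule ld_le_slope[OF cv \<open>t < s\<close>])
    then have "?g * (s - t) \<le> phi s - phi t" using that by (simp add: field_simps)
    with 1 show ?thesis by simp
  qed
  have "((\<lambda>s. (phi q - phi s) / (q - s)) \<longlongrightarrow> ?g) (at_left q)"
  proof (rule tendsto_eventually)
    show "\<forall>\<^sub>F s in at_left q. (phi q - phi s) / (q - s) = ?g"
      using eventually_at_left_real[OF tq]
    proof (rule eventually_mono)
      fix s assume "s \<in> {t<..<q}"
      then have s: "t < s" "s < q" by auto
      have "phi q - phi s = ?g * (q - s)" using lin[OF s] eq by (simp add: algebra_simps)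
      then show "(phi q - phi s) / (q - s) = ?g" using s by simp
    qed
  qed
  then show ?thesis unfolding left_deriv_def by (intro tendsto_Lim) auto
qed

lemma rep:
  fixes phi :: "real \<Rightarrow> real"
  assumes cv: "convex_on UNIV phi" and fin: "finite A"
  shows "\<exists>a b U c. finite U \<and> (\<forall>u\<in>U. 0 \<le> c u) \<and> (A \<noteq> {} \<longrightarrow> (\<forall>u\<in>U. u < Max A))
     \<and> (\<forall>p\<in>A. phi p = a + b*p + (\<Sum>u\<in>U. c u * pos_part (p - u)))
     \<and> (\<forall>p\<in>A. left_deriv phi p = b + (\<Sum>u\<in>U. c u * of_bool (u < p)))"
  using fin
proof (induct A rule: finite_linorder_max_induct)
  case empty
  show ?case by (rule exI[of _ 0], rule exI[of _ 0], rule exI[of _ "{}"]) auto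
next
  case (insert q A)
  let ?g = "left_deriv phi"
  show ?case
  proof (cases "A = {}")
    case True
    show ?thesis
      by (rule exI[of _ "phi q - ?g q * q"], rule exI[of _ "?g q"], rule exI[of _ "{}"]) (use True in auto)
  next
    case False
    define t where "t = Max A"
    have tA: "t \<in> A" using False insert(1) by (simp add: t_def)
    have tq: "t < q" using insert(2) tA by auto
    have Amax: "p \<le> t" if "p \<in> A" for p using insert(1) that by (simp add: t_def)
    have Mq: "Max (insert q A) = q"
      by (rule Max_eqI) (use insert(1,2) in auto)
    from insert(3) False obtain a b U c where fU: "finite U" and cnn: "\<forall>u\<in>U. 0 \<le> c u"
      and Ut: "\<forall>u\<in>U. u < t"
      and val: "\<forall>p\<in>A. phi p = a + b*p + (\<Sum>u\<in>U. c u * pos_part (p - u))"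
      and der: "\<forall>p\<in>A. ?g p = b + (\<Sum>u\<in>U. c u * of_bool (u < p))"
      unfolding t_def by blast
    have st: "(\<Sum>u\<in>U. c u * pos_part (t - u)) = (\<Sum>u\<in>U. c u * (t - u))"
      by (rule sum.cong) (use Ut in \<open>auto simp: pos_part_def\<close>)
    have sq: "(\<Sum>u\<in>U. c u * pos_part (q - u)) = (\<Sum>u\<in>U. c u * (q - u))"
      by (rule sum.cong) (use Ut tq in \<open>auto simp: pos_part_def\<close>)
    have dt: "(\<Sum>u\<in>U. c u * of_bool (u < t)) = (\<Sum>u\<in>U. c u)"
      by (rule sum.cong) (use Ut in auto)
    have dq: "(\<Sum>u\<in>U. c u * of_bool (u < q)) = (\<Sum>u\<in>U. c u)"
      by (rule sum.cong) (use Ut tq in auto)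
    have valt: "phi t = a + b*t + (\<Sum>u\<in>U. c u * (t - u))" using val tA st by simp
    have dert: "?g t = b + (\<Sum>u\<in>U. c u)" using der tA dt by simp
    have sqt: "(\<Sum>u\<in>U. c u * (q - u)) = (\<Sum>u\<in>U. c u * (t - u)) + (\<Sum>u\<in>U. c u) * (q - t)"
    proof -
      have "(\<Sum>u\<in>U. c u * (t - u)) + (\<Sum>u\<in>U. c u) * (q - t) = (\<Sum>u\<in>U. c u * (t - u) + c u * (q - t))"
        by (simp add: sum.distrib sum_distrib_right)
      also have "\<dots> = (\<Sum>u\<in>U. c u * (q - u))" by (rule sum.cong) (auto simp: algebra_simps)
      finally show ?thesis by simp
    qed
    have key: "a + b*q + (\<Sum>u\<in>U. c u * (q - u)) = phi t + ?g t * (q - t)"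
      using valt dert sqt by (simp add: algebra_simps)
    have s1: "?g t \<le> (phi q - phi t) / (q - t)" by (rule ld_le_slope[OF cv tq])
    have s2: "(phi q - phi t) / (q - t) \<le> ?g q" by (rule slope_le_ld[OF cv tq])
    have lo: "?g t * (q - t) \<le> phi q - phi t" using s1 tq by (simp add: pos_le_divide_eq)
    have hi: "phi q - phi t \<le> ?g q * (q - t)" using s2 tq by (simp add: pos_divide_le_eq)
    show ?thesis
    proof (cases "?g q = ?g t")
      case True
      have eqq: "phi q = phi t + ?g t * (q - t)" using lo hi unfolding True by linarith
      show ?thesis
      proof (rule exI[of _ a], rule exI[of _ b], rule exI[of _ U], rule exI[of _ c], intro conjI)
        show "insert q A \<noteq> {} \<longrightarrow> (\<forall>u\<in>U. u < Max (insert q A))"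
          using Ut tq Mq by auto
        show "\<forall>p\<in>insert q A. phi p = a + b * p + (\<Sum>u\<in>U. c u * pos_part (p - u))"
          using val key eqq sq by auto
        show "\<forall>p\<in>insert q A. ?g p = b + (\<Sum>u\<in>U. c u * of_bool (u < p))"
          using der dq dert True by auto
      qed (use fU cnn in auto)
    next
      case False
      then have gl: "?g t < ?g q" using s1 s2 by linarith
      define c0 where "c0 = ?g q - ?g t"
      define u0 where "u0 = t + (?g q * (q - t) - (phi q - phi t)) / c0"
      have c0pos: "c0 > 0" using gl by (simp add: c0_def)
      have u0t: "t \<le> u0" unfolding u0_def using hi c0pos by simp
      have strict: "?g t * (q - t) < phi q - phi t"
      proof (rule ccontr)
        assume "\<not> ?thesis"
        then have "phi q = phi t + ?g t * (q - t)" using lo by linarith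
        from ld_linear[OF cv tq this] False show False by simp
      qed
      have qu0: "c0 * (q - u0) = phi q - phi t - ?g t * (q - t)"
        unfolding u0_def using c0pos by (simp add: field_simps c0_def)
      have u0q: "u0 < q"
      proof -
        have "0 < c0 * (q - u0)" using qu0 strict by simp
        then show ?thesis using c0pos by (simp add: zero_less_mult_iff)
      qed
      have u0U: "u0 \<notin> U" using Ut u0t by force
      define c' where "c' = c(u0 := c0)"
      have sins: "(\<Sum>u\<in>insert u0 U. c' u * f u) = c0 * f u0 + (\<Sum>u\<in>U. c u * f u)" for f :: "real \<Rightarrow> real"
      proof -
        have "(\<Sum>u\<in>U. c' u * f u) = (\<Sum>u\<in>U. c u * f u)"
          by (rule sum.cong) (use u0U in \<open>auto simp: c'_def\<close>)
        moreover have "c' u0 = c0" by (simp add: c'_def)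
        ultimately show ?thesis by (simp add: sum.insert[OF fU u0U])
      qed
      show ?thesis
      proof (rule exI[of _ a], rule exI[of _ b], rule exI[of _ "insert u0 U"], rule exI[of _ c'], intro conjI)
        show "finite (insert u0 U)" using fU by simp
        show "\<forall>u\<in>insert u0 U. 0 \<le> c' u" using cnn c0pos by (auto simp: c'_def)
        show "insert q A \<noteq> {} \<longrightarrow> (\<forall>u\<in>insert u0 U. u < Max (insert q A))"
          using Ut tq Mq u0q by auto
        show "\<forall>p\<in>insert q A. phi p = a + b * p + (\<Sum>u\<in>insert u0 U. c' u * pos_part (p - u))"
        proof
          fix p assume "p \<in> insert q A"
          then consider "p = q" | "p \<in> A" by auto
          then show "phi p = a + b * p + (\<Sum>u\<in>insert u0 U. c' u * pos_part (p - u))"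
          proof cases
            case 1
            have pp: "pos_part (q - u0) = q - u0" using u0q by (simp add: pos_part_def)
            have "a + b * q + (\<Sum>u\<in>insert u0 U. c' u * pos_part (q - u))
                = a + b*q + (\<Sum>u\<in>U. c u*(q-u)) + c0*(q-u0)"
              using sins[of "\<lambda>u. pos_part (q - u)"] sq pp by simp
            also have "\<dots> = phi q" using key qu0 by linarith
            finally show ?thesis using 1 by simp
          next
            case 2
            have "pos_part (p - u0) = 0" using Amax[OF 2] u0t by (simp add: pos_part_def)
            then show ?thesis using 2 sins[of "\<lambda>u. pos_part (p - u)"] val by simp
          qed
        qed
        show "\<forall>p\<in>insert q A. ?g p = b + (\<Sum>u\<in>insert u0 U. c' u * of_bool (u < p))"
        proof
          fix p assume "p \<in> insert q A"
          then consider "p = q" | "p \<in> A" by auto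
          then show "?g p = b + (\<Sum>u\<in>insert u0 U. c' u * of_bool (u < p))"
          proof cases
            case 1
            then show ?thesis using sins[of "\<lambda>u. of_bool (u < q)"] dq dert u0q
              by (simp add: c0_def)
          next
            case 2
            have "\<not> u0 < p" using Amax[OF 2] u0t by simp
            then show ?thesis using 2 sins[of "\<lambda>u. of_bool (u < p)"] der by simp
          qed
        qed
      qed
    qed
  qed
qed

definition eF :: "real \<Rightarrow> real \<Rightarrow> real \<Rightarrow> real \<Rightarrow> real \<Rightarrow> real" where
  "eF alpha r th x y = \<bar>of_bool (y < x) - alpha\<bar> *
     (of_bool (r \<le> y) * (y - th) - of_bool (r \<le> x) * (x - th) - (y - x) * of_bool (r \<le> x))"

definition avgF :: "real \<Rightarrow> nat \<Rightarrow> (nat \<Rightarrow> real) \<Rightarrow> (nat \<Rightarrow> real) \<Rightarrow> real \<Rightarrow> real \<Rightarrow> real" where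
  "avgF alpha n x y r th = (1 / real n) * (\<Sum>i<n. eF alpha r th (x i) (y i))"

lemma E1:
  assumes "th < r" "x \<notin> {th<..<r}" "y \<notin> {th<..<r}"
  shows "elem_expectile_score alpha th x y = eF alpha r th x y"
  using assms by (auto simp: elem_expectile_score_def eF_def pos_part_def not_less)

lemma abs_half: "\<bar>of_bool b - 1/2\<bar> = (1/2::real)" by (cases b) auto

lemma E1h:
  assumes "th < r" "x1 \<notin> {th<..<r}" "x2 \<notin> {th<..<r}"
  shows "elem_expectile_score (1/2) th x2 y - elem_expectile_score (1/2) th x1 y
       = eF (1/2) r th x2 y - eF (1/2) r th x1 y"
  using assms by (auto simp: elem_expectile_score_def eF_def pos_part_def not_less abs_half field_simps)

lemma E3:
  assumes "r \<noteq> x"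
  shows "eF alpha r r x y = elem_expectile_score alpha r x y"
  using assms by (auto simp: elem_expectile_score_def eF_def pos_part_def not_less)

lemma eF_aff: "eF alpha r th x y = eF alpha r 0 x y + th * (eF alpha r 1 x y - eF alpha r 0 x y)"
  by (simp add: eF_def algebra_simps)

lemma avgF_aff: "avgF alpha n x y r th = avgF alpha n x y r 0 + th * (avgF alpha n x y r 1 - avgF alpha n x y r 0)"
proof -
  have "(\<Sum>i<n. eF alpha r th (x i) (y i)) = (\<Sum>i<n. eF alpha r 0 (x i) (y i) + th * (eF alpha r 1 (x i) (y i) - eF alpha r 0 (x i) (y i)))"
    by (rule sum.cong) (auto intro: eF_aff)
  also have "\<dots> = (\<Sum>i<n. eF alpha r 0 (x i) (y i)) + th * ((\<Sum>i<n. eF alpha r 1 (x i) (y i)) - (\<Sum>i<n. eF alpha r 0 (x i) (y i)))"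
    by (simp add: sum.distrib sum_distrib_left[symmetric] sum_subtractf)
  finally have s: "(\<Sum>i<n. eF alpha r th (x i) (y i)) = (\<Sum>i<n. eF alpha r 0 (x i) (y i)) + th * ((\<Sum>i<n. eF alpha r 1 (x i) (y i)) - (\<Sum>i<n. eF alpha r 0 (x i) (y i)))" .
  have aux: "k*(a + th*(b-a)) = k*a + th*(k*b - k*a)" for k a b :: real by (simp add: algebra_simps)
  show ?thesis unfolding avgF_def s by (rule aux)
qed

lemma interp:
  fixes d :: "real \<Rightarrow> real" and H :: "real \<Rightarrow> real \<Rightarrow> real"
  assumes fin: "finite Q"
    and h1: "\<And>th r. th < r \<Longrightarrow> (\<forall>q\<in>Q. q \<notin> {th<..<r}) \<Longrightarrow> d th = H r th"
    and h2: "\<And>q. q \<in> Q \<Longrightarrow> 0 \<le> d q \<and> 0 \<le> H q q"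
    and h3: "\<And>th. (\<forall>q\<in>Q. q < th) \<or> (\<forall>q\<in>Q. th < q) \<Longrightarrow> 0 \<le> d th"
    and aff: "\<And>r th. H r th = H r 0 + th * (H r 1 - H r 0)"
  shows "0 \<le> d th"
proof (cases "th \<in> Q")
  case True then show ?thesis using h2 by blast
next
  case nQ: False
  show ?thesis
  proof (cases "(\<forall>q\<in>Q. q < th) \<or> (\<forall>q\<in>Q. th < q)")
    case True then show ?thesis by (rule h3)
  next
    case False
    then obtain q1 q2 where q1: "q1 \<in> Q" "q1 < th" and q2: "q2 \<in> Q" "th < q2"
      using nQ by (metis linorder_neqE_linordered_idom)
    define L where "L = {q\<in>Q. q < th}"
    define R where "R = {q\<in>Q. th < q}"
    have fL: "finite L" "L \<noteq> {}" using fin q1 by (auto simp: L_def)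
    have fR: "finite R" "R \<noteq> {}" using fin q2 by (auto simp: R_def)
    define t where "t = Max L"
    define r where "r = Min R"
    have tL: "t \<in> L" using fL by (simp add: t_def)
    have rR: "r \<in> R" using fR by (simp add: r_def)
    have tmax: "q \<le> t" if "q \<in> L" for q using fL that by (simp add: t_def)
    have rmin: "r \<le> q" if "q \<in> R" for q using fR that by (simp add: r_def)
    have t: "t \<in> Q" "t < th" using tL by (auto simp: L_def)
    have r: "r \<in> Q" "th < r" using rR by (auto simp: R_def)
    have gap: "\<forall>q\<in>Q. q \<notin> {t<..<r}"
    proof (intro ballI notI)
      fix q assume q: "q \<in> Q" "q \<in> {t<..<r}"
      show False
      proof (cases q th rule: linorder_cases)
        case less then have "q \<in> L" using q by (simp add: L_def)
        with tmax q show False by force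
      next
        case equal with q nQ show False by simp
      next
        case greater then have "q \<in> R" using q by (simp add: R_def)
        with rmin q show False by force
      qed
    qed
    have gap2: "\<forall>q\<in>Q. q \<notin> {th<..<r}" using gap t by auto
    have dt: "d t = H r t" using h1[of t r] gap t r by simp
    have dth: "d th = H r th" using h1[of th r] gap2 r by simp
    define A where "A = H r 0"
    define B where "B = H r 1 - H r 0"
    have HA: "\<And>z. H r z = A + z * B" using aff unfolding A_def B_def by blast
    have ht: "0 \<le> A + t * B" using h2[OF t(1)] dt HA by simp
    have hr: "0 \<le> A + r * B" using h2[OF r(1)] HA by simp
    have eq: "(r - t) * (A + th * B) = (r - th) * (A + t * B) + (th - t) * (A + r * B)"
      by (simp add: algebra_simps)
    have a1: "0 \<le> (r - th) * (A + t * B)" using ht r by simp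
    have a2: "0 \<le> (th - t) * (A + r * B)" using hr t by simp
    have "0 \<le> (r - th) * (A + t * B) + (th - t) * (A + r * B)" using a1 a2 by simp
    then have "0 \<le> (r - t) * (A + th * B)" using eq by simp
    moreover have "r - t > 0" using t r by simp
    ultimately have "0 \<le> A + th * B" by (simp add: zero_le_mult_iff)
    then show ?thesis using dth HA by simp
  qed
qed

lemma avg_eq_avgF:
  assumes "th < r" "\<forall>i<n. x i \<notin> {th<..<r} \<and> y i \<notin> {th<..<r}"
  shows "avg_elem_score alpha n x y th = avgF alpha n x y r th"
proof -
  have "(\<Sum>i<n. elem_expectile_score alpha th (x i) (y i)) = (\<Sum>i<n. eF alpha r th (x i) (y i))"
    by (rule sum.cong) (use assms E1 in auto)
  then show ?thesis by (simp add: avg_elem_score_def avgF_def)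
qed

lemma avg_diff_half:
  assumes "th < r" "\<forall>i<n. x1 i \<notin> {th<..<r} \<and> x2 i \<notin> {th<..<r}"
  shows "avg_elem_score (1/2) n x2 y th - avg_elem_score (1/2) n x1 y th
       = avgF (1/2) n x2 y r th - avgF (1/2) n x1 y r th"
proof -
  have "(\<Sum>i<n. elem_expectile_score (1/2) th (x2 i) (y i) - elem_expectile_score (1/2) th (x1 i) (y i))
      = (\<Sum>i<n. eF (1/2) r th (x2 i) (y i) - eF (1/2) r th (x1 i) (y i))"
    by (rule sum.cong) (use assms E1h in auto)
  then show ?thesis
    unfolding avg_elem_score_def avgF_def right_diff_distrib[symmetric] sum_subtractf[symmetric] by simp
qed

lemma L2:
  "Lim (at_left r) (avg_elem_score alpha n x y) = avgF alpha n x y r r"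
proof -
  define S where "S = x ` {..<n} \<union> y ` {..<n}"
  define b where "b = Max (insert (r - 1) {p\<in>S. p < r})"
  have fS: "finite (insert (r - 1) {p\<in>S. p < r})" by (simp add: S_def)
  have br: "b < r" using fS unfolding b_def by (subst Max_less_iff) auto
  have bge: "p \<le> b" if "p \<in> S" "p < r" for p
    unfolding b_def using fS that by (intro Max_ge) auto
  have ev: "\<forall>\<^sub>F z in at_left r. avgF alpha n x y r z = avg_elem_score alpha n x y z"
    using eventually_at_left_real[OF br]
  proof (rule eventually_mono)
    fix z assume z: "z \<in> {b<..<r}"
    have "\<forall>i<n. x i \<notin> {z<..<r} \<and> y i \<notin> {z<..<r}"
    proof (intro allI impI conjI notI)
      fix i assume i: "i < n"
      { assume "x i \<in> {z<..<r}"
        then have "x i \<le> b" using bge[of "x i"] i by (auto simp: S_def)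
        with z \<open>x i \<in> {z<..<r}\<close> show False by auto }
      { assume "y i \<in> {z<..<r}"
        then have "y i \<le> b" using bge[of "y i"] i by (auto simp: S_def)
        with z \<open>y i \<in> {z<..<r}\<close> show False by auto }
    qed
    then show "avgF alpha n x y r z = avg_elem_score alpha n x y z"
      using avg_eq_avgF[of z r n x y alpha] z by simp
  qed
  have "((\<lambda>z. avgF alpha n x y r 0 + z * (avgF alpha n x y r 1 - avgF alpha n x y r 0))
        \<longlongrightarrow> avgF alpha n x y r 0 + r * (avgF alpha n x y r 1 - avgF alpha n x y r 0)) (at_left r)"
    by (intro tendsto_intros)
  then have "((\<lambda>z. avgF alpha n x y r z) \<longlongrightarrow> avgF alpha n x y r r) (at_left r)"
    by (simp only: avgF_aff[symmetric])
  then have "(avg_elem_score alpha n x y \<longlongrightarrow> avgF alpha n x y r r) (at_left r)"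
    using ev by (rule Lim_transform_eventually)
  then show ?thesis by (intro tendsto_Lim) auto
qed

lemma avgF_diag:
  assumes "\<forall>i<n. r \<noteq> x i"
  shows "avgF alpha n x y r r = avg_elem_score alpha n x y r"
proof -
  have "(\<Sum>i<n. eF alpha r r (x i) (y i)) = (\<Sum>i<n. elem_expectile_score alpha r (x i) (y i))"
    by (rule sum.cong) (use assms E3 in auto)
  then show ?thesis by (simp add: avg_elem_score_def avgF_def)
qed

lemma avg_zero:
  assumes "\<forall>i<n. (th < x i \<and> th < y i) \<or> (x i < th \<and> y i < th)"
  shows "avg_elem_score alpha n x y th = 0"
proof -
  have "(\<Sum>i<n. elem_expectile_score alpha th (x i) (y i)) = (\<Sum>i<n. 0)"
    by (rule sum.cong) (use assms in \<open>auto simp: elem_expectile_score_def pos_part_def\<close>)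
  then show ?thesis by (simp add: avg_elem_score_def)
qed

lemma half_diff_zero:
  assumes "\<forall>i<n. (th < x1 i \<and> th < x2 i) \<or> (x1 i < th \<and> x2 i < th)"
  shows "avg_elem_score (1/2) n x2 y th - avg_elem_score (1/2) n x1 y th = 0"
proof -
  have "(\<Sum>i<n. elem_expectile_score (1/2) th (x2 i) (y i) - elem_expectile_score (1/2) th (x1 i) (y i)) = (\<Sum>i<n. 0)"
    by (rule sum.cong) (use assms in \<open>auto simp: elem_expectile_score_def pos_part_def abs_half field_simps\<close>)
  then show ?thesis
    unfolding avg_elem_score_def right_diff_distrib[symmetric] sum_subtractf[symmetric] by simp
qed

lemma score_rep:
  assumes "phi x = a + b*x + (\<Sum>u\<in>U. c u * pos_part (x - u))"
    "phi y = a + b*y + (\<Sum>u\<in>U. c u * pos_part (y - u))"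
    "left_deriv phi x = b + (\<Sum>u\<in>U. c u * of_bool (u < x))"
  shows "expectile_score alpha phi x y = (\<Sum>u\<in>U. c u * elem_expectile_score alpha u x y)"
proof -
  define w where "w = \<bar>of_bool (y < x) - alpha\<bar>"
  have "(\<Sum>u\<in>U. c u * elem_expectile_score alpha u x y)
     = (\<Sum>u\<in>U. w * (c u * pos_part (y - u)) - w * (c u * pos_part (x - u)) - (w * (y - x)) * (c u * of_bool (u < x)))"
    by (rule sum.cong) (auto simp: elem_expectile_score_def w_def algebra_simps)
  also have "\<dots> = w * (\<Sum>u\<in>U. c u * pos_part (y - u)) - w * (\<Sum>u\<in>U. c u * pos_part (x - u))
        - (w * (y - x)) * (\<Sum>u\<in>U. c u * of_bool (u < x))"
    by (simp only: sum_subtractf sum_distrib_left)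
  also have "\<dots> = expectile_score alpha phi x y"
    unfolding expectile_score_def w_def[symmetric] assms by (simp add: algebra_simps)
  finally show ?thesis by simp
qed

lemma avg_rep:
  assumes "\<forall>i<n. expectile_score alpha phi (x i) (y i) = (\<Sum>u\<in>U. c u * elem_expectile_score alpha u (x i) (y i))"
  shows "(1 / real n) * (\<Sum>i<n. expectile_score alpha phi (x i) (y i)) = (\<Sum>u\<in>U. c u * avg_elem_score alpha n x y u)"
proof -
  have "(\<Sum>i<n. expectile_score alpha phi (x i) (y i)) = (\<Sum>i<n. \<Sum>u\<in>U. c u * elem_expectile_score alpha u (x i) (y i))"
    by (rule sum.cong) (use assms in auto)
  also have "\<dots> = (\<Sum>u\<in>U. c u * (\<Sum>i<n. elem_expectile_score alpha u (x i) (y i)))"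
    by (simp add: sum.swap[of _ "{..<n}"] sum_distrib_left)
  finally show ?thesis
    by (simp add: avg_elem_score_def sum_distrib_left mult.left_commute)
qed

theorem mainTheorem9:
  fixes alpha :: real and n :: nat and x1 x2 y :: "nat \<Rightarrow> real"
  assumes alpha: "0 < alpha" "alpha < 1"
    and n: "n \<ge> 1"
    and xpts: "\<forall>i<n. avg_elem_score alpha n x1 y (x1 i) \<le> avg_elem_score alpha n x2 y (x1 i)
                   \<and> avg_elem_score alpha n x1 y (x2 i) \<le> avg_elem_score alpha n x2 y (x2 i)"
    and ypts: "alpha = 1/2 \<or> (\<forall>i<n. avg_elem_score alpha n x1 y (y i) \<le> avg_elem_score alpha n x2 y (y i))"
    and leftlim: "\<forall>\<theta>0 \<in> x1 ` {..<n} \<union> x2 ` {..<n}.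
        Lim (at_left \<theta>0) (avg_elem_score alpha n x1 y) \<le> Lim (at_left \<theta>0) (avg_elem_score alpha n x2 y)"
  shows "(\<forall>\<theta>. avg_elem_score alpha n x1 y \<theta> \<le> avg_elem_score alpha n x2 y \<theta>)
       \<and> (\<forall>phi. convex_on UNIV phi \<longrightarrow>
            (1 / real n) * (\<Sum>i<n. expectile_score alpha phi (x1 i) (y i))
              \<le> (1 / real n) * (\<Sum>i<n. expectile_score alpha phi (x2 i) (y i)))"
proof -
  define X where "X = x1 ` {..<n} \<union> x2 ` {..<n}"
  define Y where "Y = y ` {..<n}"
  define d where "d = (\<lambda>th. avg_elem_score alpha n x2 y th - avg_elem_score alpha n x1 y th)"
  define H where "H = (\<lambda>r th. avgF alpha n x2 y r th - avgF alpha n x1 y r th)"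
  have fX: "finite X" and fY: "finite Y" by (auto simp: X_def Y_def)
  have aff: "H r th = H r 0 + th * (H r 1 - H r 0)" for r th
    unfolding H_def using avgF_aff[of alpha n x2 y r th] avgF_aff[of alpha n x1 y r th]
    by (simp add: algebra_simps)
  have HX: "0 \<le> H q q" if "q \<in> X" for q
    using leftlim that unfolding H_def X_def L2 by auto
  have dX: "0 \<le> d q" if "q \<in> X" for q
    using xpts that unfolding d_def X_def by auto
  have part1: "\<forall>th. avg_elem_score alpha n x1 y th \<le> avg_elem_score alpha n x2 y th"
  proof
    fix th
    have "0 \<le> d th"
    proof (cases "alpha = 1/2")
      case True
      show ?thesis
      proof (rule interp[OF fX, where H = H and d = d])
        fix th r assume "th < r" "\<forall>q\<in>X. q \<notin> {th<..<r}"
        then show "d th = H r th"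
          unfolding d_def H_def True using avg_diff_half[of th r n x1 x2 y] by (auto simp: X_def)
      next
        fix q assume "q \<in> X" then show "0 \<le> d q \<and> 0 \<le> H q q" using HX dX by auto
      next
        fix th assume "(\<forall>q\<in>X. q < th) \<or> (\<forall>q\<in>X. th < q)"
        then have "\<forall>i<n. (th < x1 i \<and> th < x2 i) \<or> (x1 i < th \<and> x2 i < th)"
          by (auto simp: X_def)
        then show "0 \<le> d th" unfolding d_def True using half_diff_zero[of n th x1 x2 y] by simp
      qed (rule aff)
    next
      case False
      with ypts have yp: "\<forall>i<n. avg_elem_score alpha n x1 y (y i) \<le> avg_elem_score alpha n x2 y (y i)"
        by simp
      show ?thesis
      proof (rule interp[OF finite_UnI[OF fX fY], where H = H and d = d])
        fix th r assume "th < r" "\<forall>q\<in>X \<union> Y. q \<notin> {th<..<r}"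
        then show "d th = H r th"
          unfolding d_def H_def using avg_eq_avgF[of th r n x1 y alpha] avg_eq_avgF[of th r n x2 y alpha]
          by (auto simp: X_def Y_def)
      next
        fix q assume q: "q \<in> X \<union> Y"
        show "0 \<le> d q \<and> 0 \<le> H q q"
        proof (cases "q \<in> X")
          case True then show ?thesis using HX dX by auto
        next
          case False
          then have qy: "q \<in> Y" using q by simp
          have dq: "0 \<le> d q" using yp qy unfolding d_def Y_def by auto
          have "\<forall>i<n. q \<noteq> x1 i" "\<forall>i<n. q \<noteq> x2 i" using False by (auto simp: X_def)
          then have "H q q = d q" unfolding H_def d_def by (simp add: avgF_diag)
          with dq show ?thesis by simp
        qed
      next
        fix th assume "(\<forall>q\<in>X \<union> Y. q < th) \<or> (\<forall>q\<in>X \<union> Y. th < q)"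
        then have a1: "\<forall>i<n. (th < x1 i \<and> th < y i) \<or> (x1 i < th \<and> y i < th)"
          and a2: "\<forall>i<n. (th < x2 i \<and> th < y i) \<or> (x2 i < th \<and> y i < th)"
          by (auto simp: X_def Y_def)
        show "0 \<le> d th" unfolding d_def using avg_zero[OF a1] avg_zero[OF a2] by simp
      qed (rule aff)
    qed
    then show "avg_elem_score alpha n x1 y th \<le> avg_elem_score alpha n x2 y th"
      by (simp add: d_def)
  qed
  have part2: "(1 / real n) * (\<Sum>i<n. expectile_score alpha phi (x1 i) (y i))
              \<le> (1 / real n) * (\<Sum>i<n. expectile_score alpha phi (x2 i) (y i))"
    if cv: "convex_on UNIV phi" for phi
  proof -
    from rep[OF cv finite_UnI[OF fX fY]] obtain a b U c where fU: "finite U"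
      and cnn: "\<forall>u\<in>U. 0 \<le> c u"
      and val: "\<forall>p\<in>X \<union> Y. phi p = a + b*p + (\<Sum>u\<in>U. c u * pos_part (p - u))"
      and der: "\<forall>p\<in>X \<union> Y. left_deriv phi p = b + (\<Sum>u\<in>U. c u * of_bool (u < p))"
      by blast
    have r1: "(1 / real n) * (\<Sum>i<n. expectile_score alpha phi (x1 i) (y i)) = (\<Sum>u\<in>U. c u * avg_elem_score alpha n x1 y u)"
      by (rule avg_rep) (use val der in \<open>auto intro!: score_rep simp: X_def Y_def\<close>)
    have r2: "(1 / real n) * (\<Sum>i<n. expectile_score alpha phi (x2 i) (y i)) = (\<Sum>u\<in>U. c u * avg_elem_score alpha n x2 y u)"
      by (rule avg_rep) (use val der in \<open>auto intro!: score_rep simp: X_def Y_def\<close>)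
    show ?thesis unfolding r1 r2
      by (rule sum_mono) (use cnn part1 in \<open>auto intro: mult_left_mono\<close>)
  qed
  show ?thesis using part1 part2 by blast
qed

end
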